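(* The twisted arrow category $\mathrm{Tw}(sOp)$ of the operad $sOp$ of single-coloured operads, equivalently the Moerdijk--Weiss dendroidal category $\Omega$, is not quasi-Gr\"obner.
   Context: Here $sOp$ is the (set-)operad whose algebras are single-coloured (symmetric) operads, whose operations are operadic trees (rooted trees with half-edges, ordered leaves, ordered half-edges at each vertex, and ordered vertices). For an operad $P$, the twisted arrow category $\mathrm{Tw}(P)$ has the operations of $P$ as objects; a morphism from an operation $p$ of arity $n$ to an operation of arity $m$ is represented by a planar rooted tree of height 3 (height 2 if $n=0$) with $m$ input leaves indexed $1,\dots,m$, with exactly one middle vertex marked by $p$, a lower vertex marked by some $q_0$ connected to the middle vertex by its first input edge, and upper vertices marked by $q_1,\dots,q_n$ grafted on the inputs of $p$ (arities matching, leaf indices increasing in planar order above each vertex); the target is the evaluation of the tree, and composition is by grafting and evaluating the subtrees not containing the middle vertex. A category $\mathcal{D}$ is quasi-Gr\"obner if there is an essentially surjective functor $\Phi:\mathcal{C}\to\mathcal{D}$ satisfying property (F) (for every object $d$ there are finitely many $f_i:d\to\Phi(c_i)$ through which every $f:d\to\Phi(c)$ factors as $\Phi(g)\circ f_i$) with $\mathcal{C}$ Gr\"obner (admissible well-orders on morphisms out of each object, and the posets $|c/\mathcal{C}|$ Noetherian). For quasi-Gr\"obner categories and left-Noetherian rings $k$, the category of modules (functors to $k$-modules) is locally Noetherian. *)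

theory Defs
  imports "HOL-Library.FuncSet"
begin

record ('o, 'm) cat =
  Obj   :: "'o set"
  Hom   :: "'o \<Rightarrow> 'o \<Rightarrow> 'm set"
  comp  :: "'m \<Rightarrow> 'm \<Rightarrow> 'm"
  ident :: "'o \<Rightarrow> 'm"

definition category :: "('o, 'm) cat \<Rightarrow> bool" where
  "category C \<longleftrightarrow>
     (\<forall>a b f. f \<in> Hom C a b \<longrightarrow> a \<in> Obj C \<and> b \<in> Obj C) \<and>
     (\<forall>a \<in> Obj C. ident C a \<in> Hom C a a) \<and>
     (\<forall>a b c f g. f \<in> Hom C a b \<longrightarrow> g \<in> Hom C b c \<longrightarrow> comp C g f \<in> Hom C a c) \<and>
     (\<forall>a b f. f \<in> Hom C a b \<longrightarrow> comp C (ident C b) f = f \<and> comp C f (ident C a) = f) \<and>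
     (\<forall>a b c d f g h. f \<in> Hom C a b \<longrightarrow> g \<in> Hom C b c \<longrightarrow> h \<in> Hom C c d \<longrightarrow>
        comp C h (comp C g f) = comp C (comp C h g) f)"

definition is_functor ::
  "('o1, 'm1) cat \<Rightarrow> ('o2, 'm2) cat \<Rightarrow> ('o1 \<Rightarrow> 'o2) \<Rightarrow> ('m1 \<Rightarrow> 'm2) \<Rightarrow> bool" where
  "is_functor C D Fo Fm \<longleftrightarrow>
     (\<forall>a \<in> Obj C. Fo a \<in> Obj D) \<and>
     (\<forall>a b f. f \<in> Hom C a b \<longrightarrow> Fm f \<in> Hom D (Fo a) (Fo b)) \<and>
     (\<forall>a \<in> Obj C. Fm (ident C a) = ident D (Fo a)) \<and>
     (\<forall>a b c f g. f \<in> Hom C a b \<longrightarrow> g \<in> Hom C b c \<longrightarrow>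
        Fm (comp C g f) = comp D (Fm g) (Fm f))"

definition isomorphic :: "('o, 'm) cat \<Rightarrow> 'o \<Rightarrow> 'o \<Rightarrow> bool" where
  "isomorphic D a b \<longleftrightarrow>
     (\<exists>f g. f \<in> Hom D a b \<and> g \<in> Hom D b a \<and>
            comp D g f = ident D a \<and> comp D f g = ident D b)"

definition ess_surj ::
  "('o1, 'm1) cat \<Rightarrow> ('o2, 'm2) cat \<Rightarrow> ('o1 \<Rightarrow> 'o2) \<Rightarrow> bool" where
  "ess_surj C D Fo \<longleftrightarrow> (\<forall>d \<in> Obj D. \<exists>c \<in> Obj C. isomorphic D (Fo c) d)"

definition property_F ::
  "('o1, 'm1) cat \<Rightarrow> ('o2, 'm2) cat \<Rightarrow> ('o1 \<Rightarrow> 'o2) \<Rightarrow> ('m1 \<Rightarrow> 'm2) \<Rightarrow> bool" where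
  "property_F C D Fo Fm \<longleftrightarrow>
     (\<forall>d \<in> Obj D. \<exists>(n::nat) cs fs.
        (\<forall>i < n. cs i \<in> Obj C \<and> fs i \<in> Hom D d (Fo (cs i))) \<and>
        (\<forall>c \<in> Obj C. \<forall>f \<in> Hom D d (Fo c).
           \<exists>i < n. \<exists>g \<in> Hom C (cs i) c. f = comp D (Fm g) (fs i)))"

definition directed :: "('o, 'm) cat \<Rightarrow> bool" where
  "directed C \<longleftrightarrow> (\<forall>x \<in> Obj C. \<forall>f \<in> Hom C x x. f = ident C x)"

definition admissible_order_at :: "('o, 'm) cat \<Rightarrow> 'o \<Rightarrow> bool" where
  "admissible_order_at C x \<longleftrightarrow>
     (\<exists>R :: 'o \<Rightarrow> 'm rel.
        (\<forall>y \<in> Obj C. well_order_on (Hom C x y) (R y)) \<and>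
        (\<forall>y z f f' g. f \<in> Hom C x y \<longrightarrow> f' \<in> Hom C x y \<longrightarrow> g \<in> Hom C y z \<longrightarrow>
           (f, f') \<in> R y \<longrightarrow> f \<noteq> f' \<longrightarrow>
           (comp C g f, comp C g f') \<in> R z \<and> comp C g f \<noteq> comp C g f'))"

text \<open>|C_x| is noetherian: the preorder on morphisms out of x given by
  f \<le> f' iff f' = h o f for some h is a well-quasi-order (every infinite sequence
  has i < j with s_i \<le> s_j); passing to isomorphism classes does not change this.\<close>
definition noetherian_at :: "('o, 'm) cat \<Rightarrow> 'o \<Rightarrow> bool" where
  "noetherian_at C x \<longleftrightarrow>
     (\<forall>s :: nat \<Rightarrow> 'm. (\<forall>n. \<exists>y \<in> Obj C. s n \<in> Hom C x y) \<longrightarrow>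
        (\<exists>i j. i < j \<and> (\<exists>y z h. s i \<in> Hom C x y \<and> s j \<in> Hom C x z \<and>
                                 h \<in> Hom C y z \<and> s j = comp C h (s i))))"

definition groebner :: "('o, 'm) cat \<Rightarrow> bool" where
  "groebner C \<longleftrightarrow> category C \<and> directed C \<and>
     (\<forall>x \<in> Obj C. admissible_order_at C x \<and> noetherian_at C x)"

text \<open>D is quasi-Groebner via a Groebner category C living on the types 'o, 'm.
  (Quasi-Groebner = this holds for some C of some types.)\<close>
definition quasi_groebner_via ::
  "('o1, 'm1) cat \<Rightarrow> ('o2, 'm2) cat \<Rightarrow> ('o1 \<Rightarrow> 'o2) \<Rightarrow> ('m1 \<Rightarrow> 'm2) \<Rightarrow> bool" where
  "quasi_groebner_via C D Fo Fm \<longleftrightarrow>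
     groebner C \<and> is_functor C D Fo Fm \<and> ess_surj C D Fo \<and> property_F C D Fo Fm"

text \<open>A finite rooted (non-planar) tree: a finite set of edges, a root edge, and vertices,
  each given by its output edge and its set of input edges.\<close>
record dtree =
  edges :: "nat set"
  root  :: nat
  verts :: "(nat \<times> nat set) set"

definition parent_rel :: "dtree \<Rightarrow> (nat \<times> nat) set" where
  "parent_rel T = {(e, v). \<exists>I. (v, I) \<in> verts T \<and> e \<in> I}"

definition wf_tree :: "dtree \<Rightarrow> bool" where
  "wf_tree T \<longleftrightarrow>
     finite (edges T) \<and> root T \<in> edges T \<and>
     (\<forall>(v, I) \<in> verts T. v \<in> edges T \<and> I \<subseteq> edges T \<and> v \<notin> I) \<and>
     (\<forall>v I J. (v, I) \<in> verts T \<longrightarrow> (v, J) \<in> verts T \<longrightarrow> I = J) \<and>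
     (\<forall>v. (\<exists>I. (v, I) \<in> verts T \<and> root T \<in> I) \<longrightarrow> False) \<and>
     (\<forall>e \<in> edges T. e \<noteq> root T \<longrightarrow> (\<exists>!v. \<exists>I. (v, I) \<in> verts T \<and> e \<in> I)) \<and>
     (\<forall>e \<in> edges T. (e, root T) \<in> (parent_rel T)\<^sup>*)"

text \<open>Operations of the free coloured operad Omega(T): tree_op T L c holds iff
  Omega(T)(l_1,...,l_n; c) is nonempty for an enumeration l_1..l_n of L (it is then a singleton).\<close>
inductive tree_op :: "dtree \<Rightarrow> nat set \<Rightarrow> nat \<Rightarrow> bool" for T where
  unit:    "e \<in> edges T \<Longrightarrow> tree_op T {e} e"
| corolla: "(v, I) \<in> verts T \<Longrightarrow> tree_op T I v"
| graft:   "tree_op T L c \<Longrightarrow> e \<in> L \<Longrightarrow> tree_op T M e \<Longrightarrow> tree_op T ((L - {e}) \<union> M) c"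

text \<open>Operad maps Omega(S) \<rightarrow> Omega(T): edge maps sending each vertex of S to an operation of Omega(T).\<close>
definition omega_map :: "dtree \<Rightarrow> dtree \<Rightarrow> (nat \<Rightarrow> nat) \<Rightarrow> bool" where
  "omega_map S T f \<longleftrightarrow>
     f \<in> edges S \<rightarrow>\<^sub>E edges T \<and>
     (\<forall>(v, I) \<in> verts S. inj_on f I \<and> tree_op T (f ` I) (f v))"

type_synonym omega_mor = "dtree \<times> dtree \<times> (nat \<Rightarrow> nat)"

definition Omega :: "(dtree, omega_mor) cat" where
  "Omega = \<lparr> Obj = {T. wf_tree T},
             Hom = (\<lambda>S T. if wf_tree S \<and> wf_tree T
                           then {(S, T, f) | f. omega_map S T f} else {}),
             comp = (\<lambda>(T', U, g) (S, T, f). (S, U, restrict (g \<circ> f) (edges S))),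
             ident = (\<lambda>T. (T, T, restrict id (edges T))) \<rparr>"

end

theory Submission
  imports Defs "HOL-Library.Infinite_Set"
begin

definition Cn :: "nat \<Rightarrow> dtree" where
  "Cn n = \<lparr> edges = {0..n}, root = 0, verts = {(0, {1..n})} \<rparr>"

definition eta :: dtree where
  "eta = \<lparr> edges = {0}, root = 0, verts = {} \<rparr>"

lemma wf_Cn: "wf_tree (Cn n)"
proof -
  have pr: "parent_rel (Cn n) = {(e, 0) | e. e \<in> {1..n}}"
    unfolding parent_rel_def Cn_def by auto
  have "\<forall>e \<in> {0..n}. (e, 0) \<in> (parent_rel (Cn n))\<^sup>*"
  proof
    fix e assume "e \<in> {0..n}"
    show "(e, 0) \<in> (parent_rel (Cn n))\<^sup>*"
    proof (cases "e = 0")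
      case True then show ?thesis by simp
    next
      case False then have "(e,0) \<in> parent_rel (Cn n)" using pr \<open>e \<in> {0..n}\<close> by auto
      then show ?thesis by blast
    qed
  qed
  then show ?thesis unfolding wf_tree_def by (auto simp: Cn_def)
qed

lemma wf_eta: "wf_tree eta"
  unfolding wf_tree_def eta_def parent_rel_def by auto

lemma ops_corolla:
  assumes "verts T \<subseteq> {(r, J)}" "r \<notin> J" "tree_op T L c"
  shows "L = {c} \<or> (c = r \<and> L = J \<and> (r, J) \<in> verts T)"
  using assms(3)
proof induct
  case (unit e) then show ?case by simp
next
  case (corolla v I) then show ?case using assms(1) by auto
next
  case (graft L c e M)
  show ?case
  proof (cases "L = {c}")
    case True
    then have "e = c" using graft by auto
    then show ?thesis using graft True by auto
  next
    case False
    then have h: "c = r" "L = J" "(r, J) \<in> verts T" using graft by auto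
    then have "e \<noteq> r" using graft assms(2) by auto
    then have "M = {e}" using graft by auto
    then have "L - {e} \<union> M = J" using h graft by auto
    then show ?thesis using h by auto
  qed
qed

lemma iso_corolla:
  assumes wf: "wf_tree V" and n: "n \<ge> 2" and iso: "isomorphic Omega V (Cn n)"
  shows "\<exists>r J. verts V = {(r, J)} \<and> r \<notin> J \<and> card J = n \<and> finite J"
proof -
  obtain F G where F: "omega_map V (Cn n) F" and G: "omega_map (Cn n) V G"
    and GF: "restrict (G \<circ> F) (edges V) = restrict id (edges V)"
    and FG: "restrict (F \<circ> G) (edges (Cn n)) = restrict id (edges (Cn n))"
  proof -
    obtain f g where fg: "f \<in> Hom Omega V (Cn n)" "g \<in> Hom Omega (Cn n) V"
       "comp Omega g f = ident Omega V" "comp Omega f g = ident Omega (Cn n)"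
      using iso unfolding isomorphic_def by blast
    obtain F where "f = (V, Cn n, F)" "omega_map V (Cn n) F" using fg(1) by (auto simp: Omega_def split: if_splits)
    moreover obtain G where "g = (Cn n, V, G)" "omega_map (Cn n) V G" using fg(2) by (auto simp: Omega_def split: if_splits)
    ultimately show ?thesis using fg(3,4) that by (simp add: Omega_def)
  qed
  have GF': "G (F x) = x" if "x \<in> edges V" for x
    using fun_cong[OF GF, of x] that by auto
  have FG': "F (G y) = y" if "y \<in> {0..n}" for y
    using fun_cong[OF FG, of y] that by (auto simp: Cn_def)
  define r where "r = G 0"
  define J where "J = G ` {1..n}"
  have injG: "inj_on G {0..n}" by (metis FG' inj_onI)
  have rJ: "r \<notin> J"
  proof
    assume "r \<in> J"
    then obtain j where j: "j \<in> {1..n}" "G 0 = G j" unfolding r_def J_def by auto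
    then have "0 = j" using inj_onD[OF injG] by auto
    then show False using j by auto
  qed
  have cJ: "card J = n" unfolding J_def
    by (subst card_image) (auto intro: inj_on_subset[OF injG])
  have tJ: "tree_op V J r" using G unfolding omega_map_def J_def r_def Cn_def by auto
  have vs: "verts V \<subseteq> {(r, J)}"
  proof
    fix p assume p: "p \<in> verts V"
    obtain v I where pv: "p = (v, I)" by fastforce
    have vI: "v \<in> edges V" "I \<subseteq> edges V" "v \<notin> I" using wf p pv unfolding wf_tree_def by auto
    have "tree_op (Cn n) (F ` I) (F v)" using F p pv unfolding omega_map_def by auto
    moreover have "verts (Cn n) \<subseteq> {(0, {1..n})}" "(0::nat) \<notin> {1..n}" by (auto simp: Cn_def)
    ultimately have "F ` I = {F v} \<or> (F v = 0 \<and> F ` I = {1..n})"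
      using ops_corolla by blast
    then show "p \<in> {(r, J)}"
    proof
      assume a: "F ` I = {F v}"
      then obtain x where "x \<in> I" "F x = F v" by (metis imageE insertI1)
      then have "x = v" using GF' vI by (metis subsetD)
      then show ?thesis using \<open>x \<in> I\<close> vI by auto
    next
      assume a: "F v = 0 \<and> F ` I = {1..n}"
      then have "v = r" using GF'[of v] vI r_def by auto
      moreover have "I = J"
      proof -
        have "(\<lambda>x. G (F x)) ` I = id ` I" by (rule image_cong) (use GF' vI in auto)
        then have "G ` (F ` I) = I" by (simp add: image_image)
        then show ?thesis unfolding J_def using a by simp
      qed
      ultimately show ?thesis using pv by simp
    qed
  qed
  have "J \<noteq> {r}" using rJ cJ n by auto
  then have "(r, J) \<in> verts V" using ops_corolla[OF vs rJ tJ] by auto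
  then have "verts V = {(r, J)}" using vs by auto
  moreover have "finite J" unfolding J_def by simp
  ultimately show ?thesis using rJ cJ by blast
qed

lemma no_map:
  assumes "wf_tree V" "wf_tree U" "n \<ge> 2" "m \<ge> 2" "n \<noteq> m"
    "isomorphic Omega V (Cn n)" "isomorphic Omega U (Cn m)" "omega_map V U k"
  shows False
proof -
  obtain r J where V: "verts V = {(r, J)}" "r \<notin> J" "card J = n" "finite J"
    using iso_corolla assms by blast
  obtain r' J' where U: "verts U = {(r', J')}" "r' \<notin> J'" "card J' = m" "finite J'"
    using iso_corolla assms by blast
  have "inj_on k J" "tree_op U (k ` J) (k r)" using assms(8) V unfolding omega_map_def by auto
  then have c: "card (k ` J) = n" using V by (simp add: card_image)
  have "k ` J = {k r} \<or> (k ` J = J')"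
    using ops_corolla[of U r' J' "k ` J" "k r"] U \<open>tree_op U (k ` J) (k r)\<close> by blast
  then show False using c U assms by auto
qed

theorem proposition5p6:
  fixes C :: "('o, 'm) cat" and Fo :: "'o \<Rightarrow> dtree" and Fm :: "'m \<Rightarrow> omega_mor"
  shows "\<not> quasi_groebner_via C Omega Fo Fm"
proof
  assume "quasi_groebner_via C Omega Fo Fm"
  then have gr: "groebner C" and isF: "is_functor C Omega Fo Fm" and es: "ess_surj C Omega Fo"
    and pF: "property_F C Omega Fo Fm"
    unfolding quasi_groebner_via_def by auto
  have etaO: "eta \<in> Obj Omega" using wf_eta by (simp add: Omega_def)
  obtain N :: nat and cs fs where cs0: "\<forall>i < N. cs i \<in> Obj C \<and> fs i \<in> Hom Omega eta (Fo (cs i))"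
    and fac: "\<forall>c \<in> Obj C. \<forall>f \<in> Hom Omega eta (Fo c). \<exists>i < N. \<exists>g \<in> Hom C (cs i) c. f = comp Omega (Fm g) (fs i)"
    using bspec[OF pF[unfolded property_F_def] etaO] by blast
  have cs: "\<forall>i < N. cs i \<in> Obj C" using cs0 by blast
  have "\<forall>n. \<exists>c \<in> Obj C. isomorphic Omega (Fo c) (Cn (n+2))"
    using es wf_Cn unfolding ess_surj_def by (simp add: Omega_def)
  then obtain cc where cc: "\<And>n. cc n \<in> Obj C" "\<And>n. isomorphic Omega (Fo (cc n)) (Cn (n+2))"
    by metis
  have wfo: "wf_tree (Fo c)" if "c \<in> Obj C" for c
    using isF that unfolding is_functor_def by (auto simp: Omega_def)
  have "\<forall>n. \<exists>i < N. \<exists>g \<in> Hom C (cs i) (cc n). True"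
  proof
    fix n
    let ?V = "Fo (cc n)"
    have "omega_map eta ?V (\<lambda>x. if x = 0 then root ?V else undefined)"
      using wfo[OF cc(1)] unfolding omega_map_def eta_def wf_tree_def by (auto split: if_splits)
    then have "(eta, ?V, (\<lambda>x. if x = 0 then root ?V else undefined)) \<in> Hom Omega eta ?V"
      using wfo[OF cc(1)] wf_eta by (auto simp: Omega_def)
    then show "\<exists>i < N. \<exists>g \<in> Hom C (cs i) (cc n). True" using fac cc(1) by blast
  qed
  then obtain ii gg where ii: "\<And>n. ii n < N" "\<And>n. gg n \<in> Hom C (cs (ii n)) (cc n)" by metis
  have "\<exists>i. infinite {n. ii n = i}"
  proof (rule ccontr)
    assume "\<not> ?thesis"
    then have "finite (\<Union>i<N. {n. ii n = i})" by auto
    moreover have "(\<Union>i<N. {n. ii n = i}) = UNIV" using ii(1) by auto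
    ultimately show False by simp
  qed
  then obtain i where "infinite {n. ii n = i}" by blast
  then obtain r :: "nat \<Rightarrow> nat" where r: "strict_mono r" "\<And>j. ii (r j) = i"
    using infinite_enumerate by blast
  have iN: "i < N" using ii(1)[of "r 0"] r(2)[of 0] by simp
  have gg: "gg (r j) \<in> Hom C (cs i) (cc (r j))" for j using ii(2)[of "r j"] r(2)[of j] by simp
  have "\<forall>x \<in> Obj C. admissible_order_at C x \<and> noetherian_at C x" using gr unfolding groebner_def by simp
  then have noe: "noetherian_at C (cs i)" using cs iN by blast
  have pre: "\<exists>y \<in> Obj C. gg (r j) \<in> Hom C (cs i) y" for j using gg cc(1) by blast
  have "\<exists>a b. a < b \<and> (\<exists>y z h. gg (r a) \<in> Hom C (cs i) y \<and> gg (r b) \<in> Hom C (cs i) z \<and>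
                                 h \<in> Hom C y z \<and> gg (r b) = comp C h (gg (r a)))"
    using noe[unfolded noetherian_at_def, rule_format, of "\<lambda>j. gg (r j)", OF pre] .
  then obtain a b y z h where ab: "a < b" "gg (r a) \<in> Hom C (cs i) y" "gg (r b) \<in> Hom C (cs i) z"
    "h \<in> Hom C y z"
    by blast
  have homO: "fst (snd p) = T" if "p \<in> Hom Omega S T" for S T p
    using that by (auto simp: Omega_def split: if_splits)
  have m1: "Fm f \<in> Hom Omega (Fo x) (Fo y)" if "f \<in> Hom C x y" for x y f
    using isF that unfolding is_functor_def by blast
  have "Fo y = Fo (cc (r a))"
    using homO[OF m1[OF ab(2)]] homO[OF m1[OF gg[of a]]] by simp
  moreover have "Fo z = Fo (cc (r b))"
    using homO[OF m1[OF ab(3)]] homO[OF m1[OF gg[of b]]] by simp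
  ultimately have hm: "Fm h \<in> Hom Omega (Fo (cc (r a))) (Fo (cc (r b)))" using m1[OF ab(4)] by simp
  then obtain k where k: "omega_map (Fo (cc (r a))) (Fo (cc (r b))) k"
    by (auto simp: Omega_def split: if_splits)
  have "r a < r b" using r(1) ab(1) by (simp add: strict_mono_less)
  then have ne: "r a + 2 \<noteq> r b + 2" by simp
  show False
    using no_map[OF wfo[OF cc(1)] wfo[OF cc(1)] _ _ ne cc(2) cc(2) k] by simp
qed

end
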